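(* Assume (a) and (b). For all $P\in\triangle_Q(\mathcal{M})$, $$G\big(z,P,P^{(Q,\lambda)}_{\Theta|Z=z}\big)=\lambda\int\Big(1-\frac{dP}{dP^{(Q,\lambda)}_{\Theta|Z=z}}(\theta)\Big)\Big(f\Big(\frac{dP^{(Q,\lambda)}_{\Theta|Z=z}}{dQ}(\theta)\Big)+f^*\Big(-\frac{L_z(\theta)+N_{Q,z}(\lambda)}{\lambda}\Big)\Big)dQ(\theta).$$
   Context: Setting. - $\mathcal{M}\subseteq\mathbb{R}^d$; $h:\mathcal{M}\times\mathcal{X}\to\mathcal{Y}$; the loss $\ell:\mathcal{Y}\times\mathcal{Y}\to[0,\infty)$ satisfies $\ell(y,y)=0$. - For a dataset $z=((x_1,y_1),\dots,(x_n,y_n))$, $L_z(\theta)=\frac1n\sum_i\ell(h(\theta,x_i),y_i)$ and $R_z(P)=\int L_z\,dP$. - $G(z,P_1,P_2)=R_z(P_1)-R_z(P_2)$. - $Q$ is a Borel probability measure on $\mathcal{M}$, and $\triangle_Q(\mathcal{M})$ is the set of Borel probability measures $P\ll Q$. Fix $\lambda>0$. - $f:[0,\infty)\to\mathbb{R}$ is convex with $f(1)=0$; $D_f(P\|Q)=\int f(\frac{dP}{dQ})dQ$. - $\dot f$ is the derivative of $f$ on $(0,\infty)$ and $\dot f^{-1}$ its inverse. - $f^*(t)=\sup_x(tx-f(x))$ is the Legendre–Fenchel transform. Assumptions. - (a) $f$ is strictly convex and differentiable. - (b) There exists $\beta$ with $\dot f^{-1}\big(-\frac{\beta+L_z(\theta)}{\lambda}\big)>0$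 on $\operatorname{supp}Q$ and $\int\dot f^{-1}\big(-\frac{\beta+L_z(\theta)}{\lambda}\big)dQ=1$. Normalization and solution. $N_{Q,z}(\lambda)$ denotes this $\beta$ (the normalization function). $P^{(Q,\lambda)}_{\Theta|Z=z}$ is the unique minimizer of $R_z(P)+\lambda D_f(P\|Q)$ over $\triangle_Q(\mathcal{M})$. It satisfies $\frac{dP^{(Q,\lambda)}_{\Theta|Z=z}}{dQ}(\theta)=\dot f^{-1}\big(-\frac{N_{Q,z}(\lambda)+L_z(\theta)}{\lambda}\big)$ for $\theta\in\operatorname{supp}Q$, and it is mutually absolutely continuous with $Q$. *)

theory Defs
  imports "HOL-Probability.Probability"
begin

definition strictly_convex_on :: "real set \<Rightarrow> (real \<Rightarrow> real) \<Rightarrow> bool" where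
  "strictly_convex_on S f \<longleftrightarrow> convex S \<and>
     (\<forall>x\<in>S. \<forall>y\<in>S. x \<noteq> y \<longrightarrow>
        (\<forall>t::real. 0 < t \<and> t < 1 \<longrightarrow> f ((1 - t) * x + t * y) < (1 - t) * f x + t * f y))"

definition emp_risk ::
  "('y \<Rightarrow> 'y \<Rightarrow> real) \<Rightarrow> ('m \<Rightarrow> 'x \<Rightarrow> 'y) \<Rightarrow> ('x \<times> 'y) list \<Rightarrow> 'm \<Rightarrow> real" where
  "emp_risk loss h z \<theta> = (\<Sum>(x, y) \<leftarrow> z. loss (h \<theta> x) y) / real (length z)"

definition exp_risk ::
  "('y \<Rightarrow> 'y \<Rightarrow> real) \<Rightarrow> ('m \<Rightarrow> 'x \<Rightarrow> 'y) \<Rightarrow> ('x \<times> 'y) list \<Rightarrow> 'm measure \<Rightarrow> real" where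
  "exp_risk loss h z P = integral\<^sup>L P (emp_risk loss h z)"

definition gap ::
  "('y \<Rightarrow> 'y \<Rightarrow> real) \<Rightarrow> ('m \<Rightarrow> 'x \<Rightarrow> 'y) \<Rightarrow> ('x \<times> 'y) list \<Rightarrow> 'm measure \<Rightarrow> 'm measure \<Rightarrow> real" where
  "gap loss h z P1 P2 = exp_risk loss h z P1 - exp_risk loss h z P2"

definition borel_prob_on :: "'a::topological_space set \<Rightarrow> 'a measure \<Rightarrow> bool" where
  "borel_prob_on M P \<longleftrightarrow> prob_space P \<and> sets P = sets (restrict_space borel M)"

definition ac_prob :: "'a::topological_space set \<Rightarrow> 'a measure \<Rightarrow> 'a measure set" where
  "ac_prob M Q = {P. borel_prob_on M P \<and> absolutely_continuous Q P}"

definition msupp :: "'a::topological_space set \<Rightarrow> 'a measure \<Rightarrow> 'a set" where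
  "msupp M Q = {\<theta> \<in> M. \<forall>U. open U \<and> \<theta> \<in> U \<longrightarrow> emeasure Q (U \<inter> M) > 0}"

definition fconj :: "(real \<Rightarrow> real) \<Rightarrow> real \<Rightarrow> real" where
  "fconj f t = (SUP x\<in>{0::real..}. t * x - f x)"

definition dinv :: "(real \<Rightarrow> real) \<Rightarrow> real \<Rightarrow> real" where
  "dinv f' y = the_inv_into {0<..} f' y"

definition gibbs_dens ::
  "(real \<Rightarrow> real) \<Rightarrow> real \<Rightarrow> real \<Rightarrow> ('m \<Rightarrow> real) \<Rightarrow> 'm \<Rightarrow> real" where
  "gibbs_dens f' lam N L \<theta> = dinv f' (- (N + L \<theta>) / lam)"

definition gibbs ::
  "'m measure \<Rightarrow> (real \<Rightarrow> real) \<Rightarrow> real \<Rightarrow> real \<Rightarrow> ('m \<Rightarrow> real) \<Rightarrow> 'm measure" where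
  "gibbs Q f' lam N L = density Q (\<lambda>\<theta>. ennreal (gibbs_dens f' lam N L \<theta>))"

end

theory Submission
  imports Defs
begin

lemma tangent_ineq:
  assumes f_convex: "convex_on {0..} f"
    and f_deriv: "\<And>x. x > 0 \<Longrightarrow> (f has_real_derivative f' x) (at x)"
    and c: "c > 0" and x: "x \<ge> 0"
  shows "f x \<ge> f c + f' c * (x - c)"
proof -
  have "f x - f c \<ge> f' c * (x - c)"
    apply (rule convex_on_imp_above_tangent[OF f_convex])
    using c x f_deriv[OF c] by (auto intro: has_field_derivative_at_within)
  then show ?thesis by simp
qed

lemma deriv_inj:
  assumes f_convex: "convex_on {0..} f"
    and f_strict: "strictly_convex_on {0..} f"
    and f_deriv: "\<And>x. x > 0 \<Longrightarrow> (f has_real_derivative f' x) (at x)"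
  shows "inj_on f' {0<..}"
proof (rule inj_onI, rule ccontr)
  fix a b :: real assume a: "a \<in> {0<..}" and b: "b \<in> {0<..}" and e: "f' a = f' b" and ne: "a \<noteq> b"
  define c where "c = f' a"
  have t1: "f b \<ge> f a + c * (b - a)" using tangent_ineq[OF f_convex f_deriv, of a b] a b unfolding c_def by auto
  have t2: "f a \<ge> f b + c * (a - b)" using tangent_ineq[OF f_convex f_deriv, of b a] a b e unfolding c_def by auto
  have t3: "f ((a+b)/2) \<ge> f a + c * ((a+b)/2 - a)" using tangent_ineq[OF f_convex f_deriv, of a "(a+b)/2"] a b unfolding c_def by auto
  have "f ((1 - 1/2) * a + (1/2) * b) < (1 - 1/2) * f a + (1/2) * f b"
  proof -
    have "\<forall>x\<in>{0::real..}. \<forall>y\<in>{0..}. x \<noteq> y \<longrightarrow> (\<forall>t::real. 0 < t \<and> t < 1 \<longrightarrow> f ((1 - t) * x + t * y) < (1 - t) * f x + t * f y)"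
      using f_strict unfolding strictly_convex_on_def by blast
    moreover have "a \<in> {0..}" "b \<in> {0..}" using a b by auto
    ultimately have "\<forall>t::real. 0 < t \<and> t < 1 \<longrightarrow> f ((1 - t) * a + t * b) < (1 - t) * f a + t * f b"
      using ne by blast
    then show ?thesis by (rule allE[of _ "1/2"]) simp
  qed
  hence s: "f ((a+b)/2) < (f a + f b) / 2" by (simp add: field_simps)
  have e1: "c * (a - b) = - (c * (b - a))" by (simp add: algebra_simps)
  have e2: "c * ((a+b)/2 - a) = c * (b - a) / 2" by (simp add: algebra_simps)
  obtain K where K: "K = c * (b - a)" by blast
  have u1: "f a + K \<le> f b" using t1 K by simp
  have u2: "f b - K \<le> f a" using t2 e1 K by simp
  have u3: "f a + K / 2 \<le> f ((a+b)/2)" using t3 e2 K by simp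
  have "f b = f a + K" using u1 u2 by linarith
  hence "(f a + f b) / 2 = f a + K / 2" by (simp add: field_simps)
  then show False using u3 s by linarith
qed

lemma fconj_at_deriv:
  assumes f_convex: "convex_on {0..} f"
    and f_deriv: "\<And>x. x > 0 \<Longrightarrow> (f has_real_derivative f' x) (at x)"
    and c: "c > 0"
  shows "fconj f (f' c) = f' c * c - f c"
  unfolding fconj_def
proof (rule cSup_eq_maximum)
  show "f' c * c - f c \<in> (\<lambda>x. f' c * x - f x) ` {0..}" using c by force
  fix y assume "y \<in> (\<lambda>x. f' c * x - f x) ` {0..}"
  then obtain x where x: "x \<ge> 0" "y = f' c * x - f x" by auto
  show "y \<le> f' c * c - f c" using tangent_ineq[OF f_convex f_deriv c x(1)] x(2) by (simp add: algebra_simps)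
qed

lemma fconj_measurable:
  "fconj f \<in> borel_measurable borel"
proof -
  define D where "D = {t::real. bdd_above ((\<lambda>x. t * x - f x) ` {0..})}"
  have down: "s \<in> D" if "t \<in> D" "s \<le> t" for s t
  proof -
    obtain B where B: "\<And>x. x \<ge> 0 \<Longrightarrow> t * x - f x \<le> B" using \<open>t \<in> D\<close> unfolding D_def bdd_above_def by auto
    have "s * x - f x \<le> B" if "x \<ge> 0" for x
      using B[OF that] mult_right_mono[OF \<open>s \<le> t\<close> that] by linarith
    then show ?thesis unfolding D_def bdd_above_def by auto
  qed
  have int: "is_interval D" unfolding is_interval_1 using down by blast
  have mono: "mono_on D (fconj f)"
  proof (rule mono_onI)
    fix s t assume "s \<in> D" "t \<in> D" "s \<le> t"
    show "fconj f s \<le> fconj f t" unfolding fconj_def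
      apply (rule cSUP_mono)
      using \<open>t \<in> D\<close> \<open>s \<le> t\<close> unfolding D_def
      by (auto intro!: bexI mult_right_mono)
  qed
  have const: "fconj f t = (LEAST z::real. False)" if "t \<notin> D" for t
  proof -
    have "(\<lambda>z. \<forall>x\<in>(\<lambda>x. t * x - f x) ` {0..}. x \<le> z) = (\<lambda>z. False)"
    proof (rule ext)
      fix z
      have "\<not> (\<forall>x\<in>{0..}. t * x - f x \<le> z)" using that unfolding D_def bdd_above_def by auto
      then show "(\<forall>x\<in>(\<lambda>x. t * x - f x) ` {0..}. x \<le> z) = False" by auto
    qed
    then show ?thesis unfolding fconj_def Sup_real_def by simp
  qed
  have eq: "fconj f = (\<lambda>t. if t \<in> D then fconj f t else (LEAST z::real. False))"
    using const by auto
  have "(\<lambda>t. if t \<in> D then fconj f t else (LEAST z::real. False)) \<in> borel_measurable borel"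
    apply (subst measurable_If_restrict_space_iff)
    using real_interval_borel_measurable[OF int] borel_measurable_mono_on_fnc[OF mono]
    by auto
  then show ?thesis using eq by simp
qed

lemma f_comp_measurable:
  assumes f_convex: "convex_on {0..} (f::real\<Rightarrow>real)"
    and X: "X \<in> borel_measurable M" and nn: "\<And>x. X x \<ge> 0"
  shows "(\<lambda>x. f (X x)) \<in> borel_measurable M"
proof -
  define F where "F = (\<lambda>x::real. if x \<in> {0<..} then f x else f 0)"
  have "continuous_on {0<..} f"
    by (rule convex_on_continuous) (auto intro: convex_on_subset[OF f_convex])
  hence "F \<in> borel_measurable borel" unfolding F_def
    by (intro borel_measurable_continuous_on_if) auto
  hence "(\<lambda>x. F (X x)) \<in> borel_measurable M" using X by measurable
  moreover have "F (X x) = f (X x)" for x using nn[of x] unfolding F_def by (cases "X x = 0") auto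
  ultimately show ?thesis by simp
qed

lemma AE_msupp:
  fixes M :: "'a::euclidean_space set"
  assumes Q: "borel_prob_on M Q"
  shows "AE \<theta> in Q. \<theta> \<in> msupp M Q"
proof -
  have sQ: "sets Q = sets (restrict_space borel M)" using Q unfolding borel_prob_on_def by auto
  have spQ: "space Q = M" using sets_eq_imp_space_eq[OF sQ] by (simp add: space_restrict_space)
  define UU where "UU = {U::'a set. open U \<and> emeasure Q (U \<inter> M) = 0}"
  obtain F where F: "F \<subseteq> UU" "countable F" "\<Union>F = \<Union>UU"
    using Lindelof[of UU] unfolding UU_def by auto
  have null: "(\<Union>U\<in>F. U \<inter> M) \<in> null_sets Q"
  proof (rule null_sets_UN')
    show "countable F" by fact
    fix U assume "U \<in> F"
    hence U: "open U" "emeasure Q (U \<inter> M) = 0" using F(1) unfolding UU_def by auto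
    have "U \<inter> M \<in> sets Q" unfolding sQ sets_restrict_space using U(1) by auto
    then show "U \<inter> M \<in> null_sets Q" using U(2) by auto
  qed
  show ?thesis
  proof (rule AE_I'[OF null])
    show "{x \<in> space Q. \<not> x \<in> msupp M Q} \<subseteq> (\<Union>U\<in>F. U \<inter> M)"
    proof
      fix x assume "x \<in> {x \<in> space Q. \<not> x \<in> msupp M Q}"
      then obtain U where "x \<in> M" "open U" "x \<in> U" "\<not> emeasure Q (U \<inter> M) > 0"
        unfolding msupp_def spQ by auto
      hence "U \<in> UU" "x \<in> U" "x \<in> M" unfolding UU_def by (auto simp: not_gr_zero)
      hence "x \<in> \<Union>F" using F(3) by auto
      then show "x \<in> (\<Union>U\<in>F. U \<inter> M)" using \<open>x \<in> M\<close> by auto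
    qed
  qed
qed

theorem theorem4:
  fixes M :: "'a::euclidean_space set"
    and Q :: "'a measure"
    and h :: "'a \<Rightarrow> 'x \<Rightarrow> 'y"
    and loss :: "'y \<Rightarrow> 'y \<Rightarrow> real"
    and z :: "('x \<times> 'y) list"
    and f f' :: "real \<Rightarrow> real"
    and lam \<beta> :: real
    and P :: "'a measure"
  assumes loss_nonneg: "\<And>y y'. loss y y' \<ge> 0"
    and loss_diag: "\<And>y. loss y y = 0"
    and Q: "borel_prob_on M Q"
    and lam: "lam > 0"
    and f_convex: "convex_on {0..} f"
    and f1: "f 1 = 0"
    \<comment> \<open>Assumption (a)\<close>
    and f_strict: "strictly_convex_on {0..} f"
    and f_deriv: "\<And>x. x > 0 \<Longrightarrow> (f has_real_derivative f' x) (at x)"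
    \<comment> \<open>Assumption (b), with beta = N_{Q,z}(lambda)\<close>
    and b_pos: "\<forall>\<theta>\<in>msupp M Q. - (\<beta> + emp_risk loss h z \<theta>) / lam \<in> f' ` {0<..}
                   \<and> dinv f' (- (\<beta> + emp_risk loss h z \<theta>) / lam) > 0"
    and b_int: "integral\<^sup>L Q (\<lambda>\<theta>. dinv f' (- (\<beta> + emp_risk loss h z \<theta>) / lam)) = 1"
    \<comment> \<open>P in the set of Borel probability measures absolutely continuous w.r.t. Q\<close>
    and P: "P \<in> ac_prob M Q"
    \<comment> \<open>finiteness of the risks R_z(P) and R_z(P*) appearing in G\<close>
    and intP: "integrable P (emp_risk loss h z)"
    and intPs: "integrable (gibbs Q f' lam \<beta> (emp_risk loss h z)) (emp_risk loss h z)"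
  shows "gap loss h z P (gibbs Q f' lam \<beta> (emp_risk loss h z)) =
    lam * integral\<^sup>L Q (\<lambda>\<theta>.
      (1 - enn2real (RN_deriv (gibbs Q f' lam \<beta> (emp_risk loss h z)) P \<theta>)) *
      (f (enn2real (RN_deriv Q (gibbs Q f' lam \<beta> (emp_risk loss h z)) \<theta>)) +
       fconj f (- (emp_risk loss h z \<theta> + \<beta>) / lam)))"

proof -
  define L where "L = emp_risk loss h z"
  define g where "g = (\<lambda>\<theta>. dinv f' (- (\<beta> + L \<theta>) / lam))"
  define Ps where "Ps = gibbs Q f' lam \<beta> L"
  define t where "t = (\<lambda>\<theta>. - (\<beta> + L \<theta>) / lam)"
  have Ps_eq: "Ps = density Q (\<lambda>\<theta>. ennreal (g \<theta>))"
    unfolding Ps_def gibbs_def gibbs_dens_def g_def ..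
  have QP: "prob_space Q" and sQ: "sets Q = sets (restrict_space borel M)"
    using Q unfolding borel_prob_on_def by auto
  interpret Q: prob_space Q by fact
  have PP: "prob_space P" "sets P = sets Q" "absolutely_continuous Q P"
    using P sQ unfolding ac_prob_def borel_prob_on_def by auto
  interpret PP: prob_space P by fact
  have g_int: "integrable Q g"
    using b_int not_integrable_integral_eq unfolding g_def L_def by fastforce
  have g_meas[measurable]: "g \<in> borel_measurable Q" using g_int by auto
  have L_meas[measurable]: "L \<in> borel_measurable Q"
    using intP measurable_cong_sets[OF PP(2) refl] unfolding L_def by auto
  have inj: "inj_on f' {0<..}" by (rule deriv_inj[OF f_convex f_strict f_deriv])
  have good: "AE \<theta> in Q. g \<theta> > 0 \<and> f' (g \<theta>) = t \<theta>"
    using AE_msupp[OF Q]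
  proof eventually_elim
    case (elim \<theta>)
    then show ?case using b_pos f_the_inv_into_f[OF inj]
      unfolding g_def t_def L_def dinv_def by auto
  qed
  have g_nn: "AE \<theta> in Q. g \<theta> \<ge> 0" using good by eventually_elim auto
  have sPs: "sets Ps = sets Q" unfolding Ps_eq by simp
  have "emeasure Ps (space Ps) = 1"
    unfolding Ps_eq using b_int g_int g_nn
    by (simp add: emeasure_density nn_integral_eq_integral g_def L_def)
  hence "finite_measure Ps" by (intro finite_measureI) simp
  hence sfPs: "sigma_finite_measure Ps" by (rule finite_measure.sigma_finite_measure)
  interpret Ps: sigma_finite_measure Ps by fact
  have acPs: "absolutely_continuous Ps P"
    unfolding absolutely_continuous_def
  proof
    fix A assume "A \<in> null_sets Ps"
    hence A: "A \<in> sets Q" "AE x in Q. x \<in> A \<longrightarrow> ennreal (g x) = 0"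
      using null_sets_density_iff[of "\<lambda>\<theta>. ennreal (g \<theta>)" Q A] unfolding Ps_eq by auto
    have "AE x in Q. x \<notin> A" using A(2) good by eventually_elim auto
    hence "A \<in> null_sets Q" using A(1) by (simp add: AE_iff_null_sets)
    then show "A \<in> null_sets P" using PP(3) unfolding absolutely_continuous_def by auto
  qed
  define R where "R = RN_deriv Ps P"
  define r where "r = (\<lambda>\<theta>. enn2real (R \<theta>))"
  define p where "p = (\<lambda>\<theta>. enn2real (RN_deriv Q P \<theta>))"
  have R_meas[measurable]: "R \<in> borel_measurable Q"
  proof -
    have "RN_deriv Ps P \<in> borel_measurable Ps" by (rule borel_measurable_RN_deriv)
    then show ?thesis unfolding R_def using measurable_cong_sets[OF sPs refl, of borel] by blast
  qed
  have r_meas[measurable]: "r \<in> borel_measurable Q" unfolding r_def by measurable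
  have p_meas[measurable]: "p \<in> borel_measurable Q" unfolding p_def by measurable
  have P1: "density Ps R = P" unfolding R_def
    using Ps.density_RN_deriv[OF acPs] PP(2) sPs by simp
  have P2: "density Ps R = density Q (\<lambda>x. ennreal (g x) * R x)"
    unfolding Ps_eq by (rule density_density_eq) auto
  have "AE x in Q. ennreal (g x) * R x = RN_deriv Q P x"
    by (rule Q.RN_deriv_unique) (use P1 P2 in auto)
  hence grp: "AE x in Q. g x * r x = p x"
    using g_nn
  proof eventually_elim
    case (elim x)
    have "enn2real (RN_deriv Q P x) = enn2real (ennreal (g x) * R x)" using elim by simp
    also have "\<dots> = enn2real (ennreal (g x)) * enn2real (R x)" by (rule enn2real_mult)
    also have "\<dots> = g x * r x" using elim by (simp add: r_def)
    finally show ?case by (simp add: p_def)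
  qed
  have "AE x in Q. ennreal (g x) = RN_deriv Q Ps x"
    by (rule Q.RN_deriv_unique) (auto simp: Ps_eq)
  hence gQ: "AE x in Q. enn2real (RN_deriv Q Ps x) = g x"
    using g_nn by eventually_elim (metis enn2real_ennreal)
  have fin: "AE x in Q. RN_deriv Q P x \<noteq> \<infinity>"
    by (rule Q.RN_deriv_finite) (use PP in \<open>auto intro: finite_measure.sigma_finite_measure PP.finite_measure_axioms\<close>)
  have P_eq: "P = density Q (\<lambda>x. ennreal (p x))"
  proof -
    have "density Q (RN_deriv Q P) = density Q (\<lambda>x. ennreal (p x))"
      by (rule density_cong) (use fin in \<open>auto simp: p_def ennreal_enn2real_if\<close>)
    then show ?thesis using Q.density_RN_deriv[OF PP(3) PP(2)] by simp
  qed
  have p_nn: "AE x in Q. 0 \<le> p x" by (simp add: p_def)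
  have intPQ: "integrable Q (\<lambda>x. p x * L x)"
  proof -
    have "integrable P L" using intP unfolding L_def .
    then show ?thesis unfolding P_eq by (subst (asm) integrable_density) (auto simp: p_nn)
  qed
  have RP: "integral\<^sup>L P L = integral\<^sup>L Q (\<lambda>x. p x * L x)"
    unfolding P_eq by (subst integral_density) (auto simp: p_nn)
  have intp: "integrable Q p"
  proof -
    have "integrable P (\<lambda>_. 1::real)" by simp
    then show ?thesis unfolding P_eq by (subst (asm) integrable_density) (auto simp: p_nn)
  qed
  have p1: "integral\<^sup>L Q p = 1"
  proof -
    have "integral\<^sup>L P (\<lambda>_. 1::real) = 1" using PP.prob_space by simp
    then show ?thesis unfolding P_eq by (subst (asm) integral_density) (auto simp: p_nn)
  qed
  have intgL: "integrable Q (\<lambda>x. g x * L x)"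
    using intPs unfolding Ps_def[symmetric] L_def[symmetric] Ps_eq
    by (subst (asm) integrable_density) (use g_nn in auto)
  have RPs: "integral\<^sup>L Ps L = integral\<^sup>L Q (\<lambda>x. g x * L x)"
    unfolding Ps_eq by (subst integral_density) (use g_nn in auto)
  have g1: "integral\<^sup>L Q g = 1" using b_int unfolding g_def L_def .
  define \<Phi> where "\<Phi> = (\<lambda>\<theta>. (1 - r \<theta>) * (f (enn2real (RN_deriv Q Ps \<theta>)) + fconj f (- (L \<theta> + \<beta>) / lam)))"
  define \<Psi> where "\<Psi> = (\<lambda>\<theta>. (- (\<beta> * g \<theta>) - g \<theta> * L \<theta> + \<beta> * p \<theta> + p \<theta> * L \<theta>) / lam)"
  have Phi_meas: "\<Phi> \<in> borel_measurable Q"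
  proof -
    have "(\<lambda>\<theta>. f (enn2real (RN_deriv Q Ps \<theta>))) \<in> borel_measurable Q"
      by (rule f_comp_measurable[OF f_convex]) auto
    moreover have "(\<lambda>\<theta>. fconj f (- (L \<theta> + \<beta>) / lam)) \<in> borel_measurable Q"
      using measurable_compose[OF _ fconj_measurable, of "\<lambda>\<theta>. - (L \<theta> + \<beta>) / lam" Q f] by auto
    ultimately show ?thesis unfolding \<Phi>_def by measurable
  qed
  have PhiPsi: "AE \<theta> in Q. \<Phi> \<theta> = \<Psi> \<theta>"
    using good grp gQ
  proof eventually_elim
    case (elim \<theta>)
    have fc: "fconj f (- (L \<theta> + \<beta>) / lam) = t \<theta> * g \<theta> - f (g \<theta>)"
      using fconj_at_deriv[OF f_convex f_deriv, of "g \<theta>"] elim by (simp add: t_def add.commute)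
    have "\<Phi> \<theta> = (1 - r \<theta>) * (t \<theta> * g \<theta>)" unfolding \<Phi>_def fc using elim by simp
    also have "\<dots> = t \<theta> * g \<theta> - t \<theta> * (g \<theta> * r \<theta>)" by (simp add: algebra_simps)
    also have "\<dots> = \<Psi> \<theta>" using elim lam unfolding \<Psi>_def t_def by (simp add: field_simps)
    finally show ?case .
  qed
  have "integral\<^sup>L Q \<Phi> = integral\<^sup>L Q \<Psi>"
    by (rule integral_cong_AE[OF Phi_meas _ PhiPsi]) (unfold \<Psi>_def, measurable)
  also have "\<dots> = (- (\<beta> * integral\<^sup>L Q g) - integral\<^sup>L Q (\<lambda>x. g x * L x)
      + \<beta> * integral\<^sup>L Q p + integral\<^sup>L Q (\<lambda>x. p x * L x)) / lam"
    unfolding \<Psi>_def using g_int intp intgL intPQ by simp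
  finally have "lam * integral\<^sup>L Q \<Phi> = integral\<^sup>L Q (\<lambda>x. p x * L x) - integral\<^sup>L Q (\<lambda>x. g x * L x)"
    using lam g1 p1 by simp
  then show ?thesis
    unfolding gap_def exp_risk_def L_def[symmetric] Ps_def[symmetric] \<Phi>_def r_def R_def RP RPs
    by simp
qed

end
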